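(* Let $m\ge 2$ be an integer and set $n=15\cdot 2^{2(m-2)}$, $a=6\cdot 2^{m-2}$, $b=8\cdot 2^{m-2}$. Let $\mathscr{A}_n=\mathrm{Circ}(n,\{\pm(\lfloor n/2\rfloor+1),\dots,\pm(\lfloor n/2\rfloor+a/2)\})$ and $\mathscr{B}_n=\mathrm{Circ}(n,\{\pm1,\dots,\pm a/2\})$ (both $n$-vertex $a$-regular circulant graphs; we also write $\mathscr{A}_n,\mathscr{B}_n$ for their adjacency matrices), and let $C_n$ be the adjacency matrix of an arbitrary $n$-vertex circulant graph of degree $b$. Let $G_n$ be the graph on $2n+2$ vertices with adjacency matrix \[ \begin{bmatrix} 0 & \mathbf{j}_n^T & 0 & 0\\ \mathbf{j}_n & \mathscr{A}_n & C_n & 0\\ 0 & C_n^T & \mathscr{B}_n & \mathbf{j}_n\\ 0 & 0 & \mathbf{j}_n^T & 0 \end{bmatrix}, \] and let $a_n$ and $b_n$ be the vertices corresponding to the first and last rows, respectively. Then $G_n$ has perfect state transfer between $a_n$ and $b_n$, but there is no automorphism $\tau$ of $G_n$ with $\tau(a_n)=b_n$.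
   Context: $\mathrm{Circ}(n,S)$ denotes the circulant graph (Cayley graph of $\mathbb{Z}_n$) with vertex set $\mathbb{Z}_n$ where $x,y$ are adjacent iff $x-y\in S$ (with $S=-S$). $\mathbf{j}_n$ is the all-ones column vector of length $n$. A graph with adjacency matrix $A$ has perfect state transfer from $u$ to $v$ if $|\langle v|e^{-itA}|u\rangle|=1$ for some time $t$, where $|u\rangle$ is the standard basis vector of vertex $u$. An automorphism is a bijection of the vertex set preserving adjacency and non-adjacency. *)

theory Defs
  imports "HOL-Analysis.Analysis"
begin

text \<open>Graphs on the vertex set {0..<N} are given by adjacency predicates
  adj :: nat => nat => bool; the adjacency matrix has entries 1/0.\<close>

definition adj_mat :: "(nat \<Rightarrow> nat \<Rightarrow> bool) \<Rightarrow> nat \<Rightarrow> nat \<Rightarrow> complex" where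
  "adj_mat adj i j = (if adj i j then 1 else 0)"

fun mat_pow :: "nat \<Rightarrow> (nat \<Rightarrow> nat \<Rightarrow> complex) \<Rightarrow> nat \<Rightarrow> nat \<Rightarrow> nat \<Rightarrow> complex" where
  "mat_pow N M 0 i j = (if i = j then 1 else 0)"
| "mat_pow N M (Suc k) i j = (\<Sum>l<N. M i l * mat_pow N M k l j)"

definition exp_entry :: "nat \<Rightarrow> (nat \<Rightarrow> nat \<Rightarrow> complex) \<Rightarrow> real \<Rightarrow> nat \<Rightarrow> nat \<Rightarrow> complex" where
  "exp_entry N M t v u = (\<Sum>k. ((- \<i> * complex_of_real t) ^ k / of_nat (fact k)) * mat_pow N M k v u)"

definition has_PST :: "nat \<Rightarrow> (nat \<Rightarrow> nat \<Rightarrow> bool) \<Rightarrow> nat \<Rightarrow> nat \<Rightarrow> bool" where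
  "has_PST N adj u v \<longleftrightarrow> (\<exists>t::real. cmod (exp_entry N (adj_mat adj) t v u) = 1)"

definition is_automorphism :: "nat \<Rightarrow> (nat \<Rightarrow> nat \<Rightarrow> bool) \<Rightarrow> (nat \<Rightarrow> nat) \<Rightarrow> bool" where
  "is_automorphism N adj \<tau> \<longleftrightarrow> bij_betw \<tau> {0..<N} {0..<N} \<and>
     (\<forall>x\<in>{0..<N}. \<forall>y\<in>{0..<N}. adj (\<tau> x) (\<tau> y) = adj x y)"

definition circ_adj :: "nat \<Rightarrow> int set \<Rightarrow> nat \<Rightarrow> nat \<Rightarrow> bool" where
  "circ_adj n S x y \<longleftrightarrow> x < n \<and> y < n \<and> (int x - int y) mod int n \<in> (\<lambda>s. s mod int n) ` S"

definition circ_conn_set :: "nat \<Rightarrow> nat \<Rightarrow> int set \<Rightarrow> bool" where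
  "circ_conn_set n d S \<longleftrightarrow> (\<forall>s\<in>S. - s \<in> S) \<and> (\<forall>s\<in>S. s mod int n \<noteq> 0)
     \<and> card ((\<lambda>s. s mod int n) ` S) = d"

text \<open>The graph with block adjacency matrix
  [[0, j^T, 0, 0], [j, A, C, 0], [0, C^T, B, j], [0, 0, j^T, 0]] on 2n+2 vertices:
  vertex 0 is the first row, vertices 1..n the A-block (vertex i is index i-1),
  vertices n+1..2n the B-block (vertex i is index i-n-1), vertex 2n+1 the last row.\<close>
definition block_adj :: "nat \<Rightarrow> int set \<Rightarrow> int set \<Rightarrow> int set \<Rightarrow> nat \<Rightarrow> nat \<Rightarrow> bool" where
  "block_adj n SA SB SC i j \<longleftrightarrow>
     (i = 0 \<and> 1 \<le> j \<and> j \<le> n) \<or> (j = 0 \<and> 1 \<le> i \<and> i \<le> n)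
   \<or> (1 \<le> i \<and> i \<le> n \<and> 1 \<le> j \<and> j \<le> n \<and> circ_adj n SA (i - 1) (j - 1))
   \<or> (1 \<le> i \<and> i \<le> n \<and> n + 1 \<le> j \<and> j \<le> 2 * n \<and> circ_adj n SC (i - 1) (j - n - 1))
   \<or> (n + 1 \<le> i \<and> i \<le> 2 * n \<and> 1 \<le> j \<and> j \<le> n \<and> circ_adj n SC (j - 1) (i - n - 1))
   \<or> (n + 1 \<le> i \<and> i \<le> 2 * n \<and> n + 1 \<le> j \<and> j \<le> 2 * n \<and> circ_adj n SB (i - n - 1) (j - n - 1))
   \<or> (i = 2 * n + 1 \<and> n + 1 \<le> j \<and> j \<le> 2 * n) \<or> (j = 2 * n + 1 \<and> n + 1 \<le> i \<and> i \<le> 2 * n)"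

definition conn_A :: "nat \<Rightarrow> nat \<Rightarrow> int set" where
  "conn_A n h = {s. \<exists>k::int. 1 \<le> k \<and> k \<le> int h \<and>
      (s = int (n div 2) + k \<or> s = - (int (n div 2) + k))}"

definition conn_B :: "nat \<Rightarrow> int set" where
  "conn_B h = {s. \<exists>k::int. 1 \<le> k \<and> k \<le> int h \<and> (s = k \<or> s = - k)}"

end

theory Submission
  imports Defs
begin


lemma four_gap:
  fixes u v w z L n :: int
  assumes "0 \<le> u" "u < n" "0 \<le> v" "v < n" "0 \<le> w" "w < n" "0 \<le> z" "z < n"
    "L \<le> \<bar>u - v\<bar>" "L \<le> \<bar>u - w\<bar>" "L \<le> \<bar>u - z\<bar>"
    "L \<le> \<bar>v - w\<bar>" "L \<le> \<bar>v - z\<bar>" "L \<le> \<bar>w - z\<bar>" "n \<le> 3 * L"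
  shows False
proof -
  have Lp: "0 < L" using assms by linarith
  have b: "x div L \<in> {0,1,2}" if "0 \<le> x" "x < n" for x
  proof -
    have "0 \<le> x div L" using that Lp by (simp add: pos_imp_zdiv_nonneg_iff)
    moreover have "x div L < 3"
    proof -
      have "x = L * (x div L) + x mod L" by simp
      moreover have "0 \<le> x mod L" using Lp by simp
      ultimately have "L * (x div L) < L * 3" using that assms(15) by linarith
      then show ?thesis using Lp by simp
    qed
    ultimately show ?thesis by auto
  qed
  have s: "\<bar>x - y\<bar> < L" if "x div L = y div L" for x y
  proof -
    have e1: "x mod L = x - L * (x div L)" by (simp add: minus_mult_div_eq_mod)
    have e2: "y mod L = y - L * (x div L)" using that by (simp add: minus_mult_div_eq_mod)
    have "x - y = x mod L - y mod L" using e1 e2 by linarith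
    moreover have "0 \<le> x mod L" "x mod L < L" "0 \<le> y mod L" "y mod L < L" using Lp by simp_all
    ultimately show ?thesis by linarith
  qed
  have "u div L = v div L \<or> u div L = w div L \<or> u div L = z div L \<or> v div L = w div L
     \<or> v div L = z div L \<or> w div L = z div L"
    using b[OF assms(1,2)] b[OF assms(3,4)] b[OF assms(5,6)] b[OF assms(7,8)] by auto
  then show False
  proof (elim disjE)
    assume "u div L = v div L" then show False using s[of u v] assms(9) by linarith
  next
    assume "u div L = w div L" then show False using s[of u w] assms(10) by linarith
  next
    assume "u div L = z div L" then show False using s[of u z] assms(11) by linarith
  next
    assume "v div L = w div L" then show False using s[of v w] assms(12) by linarith
  next
    assume "v div L = z div L" then show False using s[of v z] assms(13) by linarith
  next
    assume "w div L = z div L" then show False using s[of w z] assms(14) by linarith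
  qed
qed

lemma connA_res:
  assumes "r \<in> (\<lambda>s. s mod int n) ` conn_A n h" "int (n div 2) + int h < int n"
  shows "int n - int (n div 2) - int h \<le> r \<and> r \<le> int (n div 2) + int h"
proof -
  obtain s j where sj: "r = s mod int n" "1 \<le> j" "j \<le> int h"
      "s = int (n div 2) + j \<or> s = - (int (n div 2) + j)"
    using assms(1) unfolding conn_A_def by auto
  have n2: "int n \<le> 2 * int (n div 2) + 1" by linarith
  show ?thesis
  proof (cases "s = int (n div 2) + j")
    case True
    then have "r = int (n div 2) + j" using sj assms(2) by simp
    then show ?thesis using sj n2 by linarith
  next
    case False
    then have s: "s = - (int (n div 2) + j)" using sj by auto
    have "(int (n div 2) + j) mod int n = int (n div 2) + j"
      using sj assms(2) by simp
    define q where "q = int (n div 2) + j"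
    have q1: "0 \<le> int n - q" "int n - q < int n" using sj assms(2) unfolding q_def by linarith+
    have "(- q) mod int n = (int n - q) mod int n"
      by (metis add.commute diff_conv_add_uminus mod_add_self1)
    also have "\<dots> = int n - q" using q1 by (intro mod_pos_pos_trivial) auto
    finally have "r = int n - (int (n div 2) + j)"
      using sj s unfolding q_def by simp
    then show ?thesis using sj n2 by linarith
  qed
qed

lemma connA_gap:
  assumes "circ_adj n (conn_A n h) x y" "int (n div 2) + int h < int n"
  shows "int n - int (n div 2) - int h \<le> \<bar>int x - int y\<bar>"
proof -
  have xy: "x < n" "y < n" using assms(1) unfolding circ_adj_def by auto
  define r where "r = (int x - int y) mod int n"
  have r: "r \<in> (\<lambda>s. s mod int n) ` conn_A n h" using assms(1) unfolding circ_adj_def r_def by auto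
  note b = connA_res[OF r assms(2)]
  show ?thesis
  proof (cases "x \<ge> y")
    case True
    then have "r = int x - int y" using xy unfolding r_def by simp
    then show ?thesis using b True by linarith
  next
    case False
    have "r = (int x - int y + int n) mod int n" unfolding r_def by simp
    also have "\<dots> = int x - int y + int n" using xy False by (intro mod_pos_pos_trivial) auto
    finally have "r = int x - int y + int n" .
    then show ?thesis using b False by linarith
  qed
qed

lemma connB_adj:
  assumes "x < n" "y < n" "1 \<le> \<bar>int x - int y\<bar>" "\<bar>int x - int y\<bar> \<le> int h"
  shows "circ_adj n (conn_B h) x y"
proof -
  have "int x - int y \<in> conn_B h" unfolding conn_B_def using assms(3,4)
    by (intro CollectI exI[of _ "\<bar>int x - int y\<bar>"]) auto
  then show ?thesis unfolding circ_adj_def using assms by auto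
qed



lemma no_aut:
  assumes h1: "int (n div 2) + int h < int n"
    and h2: "int n \<le> 3 * (int n - int (n div 2) - int h)" and h3: "3 \<le> h" "4 \<le> n"
  shows "\<not> (\<exists>\<tau>. is_automorphism (2 * n + 2) (block_adj n (conn_A n h) (conn_B h) SC) \<tau>
              \<and> \<tau> 0 = 2 * n + 1)"
proof
  assume "\<exists>\<tau>. is_automorphism (2 * n + 2) (block_adj n (conn_A n h) (conn_B h) SC) \<tau> \<and> \<tau> 0 = 2 * n + 1"
  then obtain \<tau> where aut: "is_automorphism (2 * n + 2) (block_adj n (conn_A n h) (conn_B h) SC) \<tau>"
    and t0: "\<tau> 0 = 2 * n + 1" by blast
  define adj where "adj = block_adj n (conn_A n h) (conn_B h) SC"
  have bij: "bij_betw \<tau> {0..<2*n+2} {0..<2*n+2}" and pres: "\<And>x y. x < 2*n+2 \<Longrightarrow> y < 2*n+2 \<Longrightarrow> adj (\<tau> x) (\<tau> y) = adj x y"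
    using aut unfolding is_automorphism_def adj_def by auto
  have pre: "\<exists>x. x < 2*n+2 \<and> \<tau> x = n + 1 + i" if "i < 4" for i
  proof -
    have "n + 1 + i \<in> \<tau> ` {0..<2*n+2}" using bij that h3 unfolding bij_betw_def by auto
    then show ?thesis by auto
  qed
  obtain f where f: "\<And>i. i < 4 \<Longrightarrow> f i < 2*n+2 \<and> \<tau> (f i) = n + 1 + i"
    using pre by metis
  have fA: "1 \<le> f i \<and> f i \<le> n" if "i < 4" for i
  proof -
    have "adj (\<tau> 0) (\<tau> (f i))" using t0 f[OF that] that h3 unfolding adj_def block_adj_def by auto
    then have "adj 0 (f i)" using pres[of 0 "f i"] f[OF that] by auto
    then show ?thesis unfolding adj_def block_adj_def by auto
  qed
  have gap: "int n - int (n div 2) - int h \<le> \<bar>int (f i - 1) - int (f j - 1)\<bar>"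
    if "i < 4" "j < 4" "i \<noteq> j" for i j
  proof -
    have cb: "circ_adj n (conn_B h) i j"
      using that h3 by (intro connB_adj) auto
    have "adj (\<tau> (f i)) (\<tau> (f j))"
      using f[OF that(1)] f[OF that(2)] cb that h3 unfolding adj_def block_adj_def by auto
    moreover have "adj (\<tau> (f i)) (\<tau> (f j)) = adj (f i) (f j)"
      using pres f[OF that(1)] f[OF that(2)] by blast
    ultimately have "adj (f i) (f j)" by simp
    then have "circ_adj n (conn_A n h) (f i - 1) (f j - 1)"
      using fA[OF that(1)] fA[OF that(2)] unfolding adj_def block_adj_def by auto
    then show ?thesis by (rule connA_gap[OF _ h1])
  qed
  have lt: "0 \<le> int (f i - 1) \<and> int (f i - 1) < int n" if "i < 4" for i
    using fA[OF that] by auto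
  have l0: "0 \<le> int (f 0 - 1)" "int (f 0 - 1) < int n" using lt[of 0] by auto
  have l1: "0 \<le> int (f 1 - 1)" "int (f 1 - 1) < int n" using lt[of 1] by auto
  have l2: "0 \<le> int (f 2 - 1)" "int (f 2 - 1) < int n" using lt[of 2] by auto
  have l3: "0 \<le> int (f 3 - 1)" "int (f 3 - 1) < int n" using lt[of 3] by auto
  show False
    by (rule four_gap[OF l0 l1 l2 l3 gap[of 0 1] gap[of 0 2] gap[of 0 3] gap[of 1 2]
      gap[of 1 3] gap[of 2 3] h2]) simp_all
qed



lemma card_modset1:
  assumes "x < n" "R \<subseteq> {0..<int n}"
  shows "card {y\<in>{..<n}. (int x - int y) mod int n \<in> R} = card R"
proof -
  have n0: "0 < n" using assms by simp
  define g where "g y = (int x - int y) mod int n" for y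
  have inj: "inj_on g {y\<in>{..<n}. g y \<in> R}"
  proof (rule inj_onI)
    fix a b assume a: "a \<in> {y\<in>{..<n}. g y \<in> R}" and b: "b \<in> {y\<in>{..<n}. g y \<in> R}" and e: "g a = g b"
    have "int a mod int n = (int x - (int x - int a)) mod int n" by simp
    also have "\<dots> = (int x - g a) mod int n" unfolding g_def by (simp add: mod_diff_right_eq)
    also have "\<dots> = (int x - g b) mod int n" using e by simp
    also have "\<dots> = (int x - (int x - int b)) mod int n" unfolding g_def by (simp add: mod_diff_right_eq)
    also have "\<dots> = int b mod int n" by simp
    finally have "int a mod int n = int b mod int n" .
    then show "a = b" using a b by simp
  qed
  have img: "g ` {y\<in>{..<n}. g y \<in> R} = R"
  proof
    show "g ` {y\<in>{..<n}. g y \<in> R} \<subseteq> R" by auto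
  next
    show "R \<subseteq> g ` {y\<in>{..<n}. g y \<in> R}"
    proof
      fix r assume r: "r \<in> R"
      then have r0: "0 \<le> r" "r < int n" using assms by auto
      define y where "y = nat ((int x - r) mod int n)"
      have iy: "int y = (int x - r) mod int n" unfolding y_def using n0 by simp
      have yn: "y < n" using iy n0 by (metis Euclidean_Rings.pos_mod_bound of_nat_0_less_iff of_nat_less_iff)
      have "g y = (int x - (int x - r) mod int n) mod int n" unfolding g_def iy by simp
      also have "\<dots> = (int x - (int x - r)) mod int n" by (simp add: mod_diff_right_eq)
      also have "\<dots> = r" using r0 by simp
      finally have "g y = r" .
      then show "r \<in> g ` {y\<in>{..<n}. g y \<in> R}" using yn r by force
    qed
  qed
  have "card {y\<in>{..<n}. g y \<in> R} = card R" using card_image[OF inj] img by simp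
  then show ?thesis unfolding g_def .
qed

lemma card_modset2:
  assumes "x < n" "R \<subseteq> {0..<int n}"
  shows "card {y\<in>{..<n}. (int y - int x) mod int n \<in> R} = card R"
proof -
  have n0: "0 < n" using assms by simp
  define g where "g y = (int y - int x) mod int n" for y
  have inj: "inj_on g {y\<in>{..<n}. g y \<in> R}"
  proof (rule inj_onI)
    fix a b assume a: "a \<in> {y\<in>{..<n}. g y \<in> R}" and b: "b \<in> {y\<in>{..<n}. g y \<in> R}" and e: "g a = g b"
    have "int a mod int n = ((int a - int x) + int x) mod int n" by simp
    also have "\<dots> = (g a + int x) mod int n" unfolding g_def by (simp add: mod_add_left_eq)
    also have "\<dots> = (g b + int x) mod int n" using e by simp
    also have "\<dots> = ((int b - int x) + int x) mod int n" unfolding g_def by (simp add: mod_add_left_eq)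
    also have "\<dots> = int b mod int n" by simp
    finally have "int a mod int n = int b mod int n" .
    then show "a = b" using a b by simp
  qed
  have img: "g ` {y\<in>{..<n}. g y \<in> R} = R"
  proof
    show "g ` {y\<in>{..<n}. g y \<in> R} \<subseteq> R" by auto
  next
    show "R \<subseteq> g ` {y\<in>{..<n}. g y \<in> R}"
    proof
      fix r assume r: "r \<in> R"
      then have r0: "0 \<le> r" "r < int n" using assms by auto
      define y where "y = nat ((int x + r) mod int n)"
      have iy: "int y = (int x + r) mod int n" unfolding y_def using n0 by simp
      have yn: "y < n" using iy n0 by (metis Euclidean_Rings.pos_mod_bound of_nat_0_less_iff of_nat_less_iff)
      have "g y = ((int x + r) mod int n - int x) mod int n" unfolding g_def iy by simp
      also have "\<dots> = ((int x + r) - int x) mod int n" by (simp add: mod_diff_left_eq)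
      also have "\<dots> = r" using r0 by simp
      finally have "g y = r" .
      then show "r \<in> g ` {y\<in>{..<n}. g y \<in> R}" using yn r by force
    qed
  qed
  have "card {y\<in>{..<n}. g y \<in> R} = card R" using card_image[OF inj] img by simp
  then show ?thesis unfolding g_def .
qed

lemma modimg_sub: "0 < n \<Longrightarrow> (\<lambda>s. s mod int n) ` S \<subseteq> {0..<int n}"
  by auto

lemma sum_circ1:
  assumes "x < n"
  shows "(\<Sum>l<n. (if circ_adj n S x l then c else 0)) = of_nat (card ((\<lambda>s. s mod int n) ` S)) * c"
proof -
  have "(\<Sum>l<n. (if circ_adj n S x l then c else 0)) = (\<Sum>l\<in>{y\<in>{..<n}. circ_adj n S x y}. c)"
    by (rule sum.inter_filter[symmetric]) simp
  also have "{y\<in>{..<n}. circ_adj n S x y} = {y\<in>{..<n}. (int x - int y) mod int n \<in> (\<lambda>s. s mod int n) ` S}"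
    using assms unfolding circ_adj_def by auto
  also have "(\<Sum>l\<in>\<dots>. c) = of_nat (card ((\<lambda>s. s mod int n) ` S)) * c"
    using card_modset1[OF assms modimg_sub] assms by simp
  finally show ?thesis .
qed

lemma sum_circ2:
  assumes "x < n"
  shows "(\<Sum>l<n. (if circ_adj n S l x then c else 0)) = of_nat (card ((\<lambda>s. s mod int n) ` S)) * c"
proof -
  have "(\<Sum>l<n. (if circ_adj n S l x then c else 0)) = (\<Sum>l\<in>{y\<in>{..<n}. circ_adj n S y x}. c)"
    by (rule sum.inter_filter[symmetric]) simp
  also have "{y\<in>{..<n}. circ_adj n S y x} = {y\<in>{..<n}. (int y - int x) mod int n \<in> (\<lambda>s. s mod int n) ` S}"
    using assms unfolding circ_adj_def by auto
  also have "(\<Sum>l\<in>\<dots>. c) = of_nat (card ((\<lambda>s. s mod int n) ` S)) * c"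
    using card_modset2[OF assms modimg_sub] assms by simp
  finally show ?thesis .
qed

definition ca :: "complex \<Rightarrow> nat \<Rightarrow> complex" where
  "ca K j = (15*K)^j/32 + 15*(-K)^j/32 + 5*(3*K)^j/16 + 3*(-5*K)^j/16"
definition cb :: "complex \<Rightarrow> nat \<Rightarrow> complex" where
  "cb K j = ((15*K)^j - (-K)^j)/(32*K) + ((3*K)^j - (-5*K)^j)/(16*K)"
definition cc :: "complex \<Rightarrow> nat \<Rightarrow> complex" where
  "cc K j = ((15*K)^j - (-K)^j)/(32*K) - ((3*K)^j - (-5*K)^j)/(16*K)"
definition cd :: "complex \<Rightarrow> nat \<Rightarrow> complex" where
  "cd K j = (15*K)^j/32 + 15*(-K)^j/32 - 5*(3*K)^j/16 - 3*(-5*K)^j/16"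

lemma rec_a: "K \<noteq> 0 \<Longrightarrow> ca K (Suc j) = 15*K^2 * cb K j"
  unfolding ca_def cb_def by (simp add: field_simps power2_eq_square)
lemma rec_b: "K \<noteq> 0 \<Longrightarrow> cb K (Suc j) = ca K j + 6*K * cb K j + 8*K * cc K j"
  unfolding ca_def cb_def cc_def by (simp add: field_simps power2_eq_square)
lemma rec_c: "K \<noteq> 0 \<Longrightarrow> cc K (Suc j) = 8*K * cb K j + 6*K * cc K j + cd K j"
  unfolding cd_def cb_def cc_def by (simp add: field_simps power2_eq_square)
lemma rec_d: "K \<noteq> 0 \<Longrightarrow> cd K (Suc j) = 15*K^2 * cc K j"
  unfolding cd_def cc_def by (simp add: field_simps power2_eq_square)



lemma neg_mod_int: "0 < q \<Longrightarrow> q < int n \<Longrightarrow> (- q) mod int n = int n - q"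
proof -
  assume q: "0 < q" "q < int n"
  have "(- q) mod int n = (int n - q) mod int n"
    by (metis add.commute diff_conv_add_uminus mod_add_self1)
  also have "\<dots> = int n - q" using q by (intro mod_pos_pos_trivial) auto
  finally show ?thesis .
qed

lemma img_connA:
  assumes "int (n div 2) + int h < int n"
  shows "(\<lambda>s. s mod int n) ` conn_A n h =
    {int (n div 2) + 1 .. int (n div 2) + int h} \<union> {int n - int (n div 2) - int h .. int n - int (n div 2) - 1}"
  (is "?L = ?A \<union> ?B")
proof
  show "?L \<subseteq> ?A \<union> ?B"
  proof
    fix r assume "r \<in> ?L"
    then obtain s j where sj: "r = s mod int n" "1 \<le> j" "j \<le> int h"
      "s = int (n div 2) + j \<or> s = - (int (n div 2) + j)"
      unfolding conn_A_def by auto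
    show "r \<in> ?A \<union> ?B"
    proof (cases "s = int (n div 2) + j")
      case True
      then have "r = int (n div 2) + j" using sj assms by simp
      then show ?thesis using sj by auto
    next
      case False
      then have s: "s = - (int (n div 2) + j)" using sj by auto
      have e: "(- (int (n div 2) + j)) mod int n = int n - (int (n div 2) + j)"
        by (rule neg_mod_int) (use sj assms in linarith)+
      have "r = int n - (int (n div 2) + j)" using sj(1) s e by simp
      then show ?thesis using sj by auto
    qed
  qed
next
  show "?A \<union> ?B \<subseteq> ?L"
  proof
    fix r assume r: "r \<in> ?A \<union> ?B"
    show "r \<in> ?L"
    proof (cases "r \<in> ?A")
      case True
      have "r \<in> conn_A n h" unfolding conn_A_def using True
        by (intro CollectI exI[of _ "r - int (n div 2)"]) auto
      moreover have "r mod int n = r" using True assms by (intro mod_pos_pos_trivial) auto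
      ultimately show ?thesis by (metis image_eqI)
    next
      case False
      then have rB: "r \<in> ?B" using r by auto
      have "r - int n \<in> conn_A n h" unfolding conn_A_def using rB
        by (intro CollectI exI[of _ "int n - int (n div 2) - r"]) auto
      moreover have "(r - int n) mod int n = r" using rB assms by (simp add: mod_pos_pos_trivial)
      ultimately show ?thesis by (metis image_eqI)
    qed
  qed
qed

lemma card_connA:
  assumes "int (n div 2) + int h < int n"
  shows "card ((\<lambda>s. s mod int n) ` conn_A n h) = 2 * h"
proof -
  have n2: "int n \<le> 2 * int (n div 2) + 1" by linarith
  have "card ({int (n div 2) + 1 .. int (n div 2) + int h} \<union> {int n - int (n div 2) - int h .. int n - int (n div 2) - 1})
     = card {int (n div 2) + 1 .. int (n div 2) + int h} + card {int n - int (n div 2) - int h .. int n - int (n div 2) - 1}"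
    using n2 by (intro card_Un_disjoint) auto
  then show ?thesis unfolding img_connA[OF assms] by simp
qed

lemma img_connB:
  assumes "2 * int h < int n"
  shows "(\<lambda>s. s mod int n) ` conn_B h = {1 .. int h} \<union> {int n - int h .. int n - 1}"
  (is "?L = ?A \<union> ?B")
proof
  show "?L \<subseteq> ?A \<union> ?B"
  proof
    fix r assume "r \<in> ?L"
    then obtain s j where sj: "r = s mod int n" "1 \<le> j" "j \<le> int h" "s = j \<or> s = - j"
      unfolding conn_B_def by auto
    show "r \<in> ?A \<union> ?B"
    proof (cases "s = j")
      case True
      then have "r = j" using sj assms by simp
      then show ?thesis using sj by auto
    next
      case False
      then have s: "s = - j" using sj by auto
      have "r = int n - j" using sj s assms by (simp add: neg_mod_int)
      then show ?thesis using sj by auto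
    qed
  qed
next
  show "?A \<union> ?B \<subseteq> ?L"
  proof
    fix r assume r: "r \<in> ?A \<union> ?B"
    show "r \<in> ?L"
    proof (cases "r \<in> ?A")
      case True
      have "r \<in> conn_B h" unfolding conn_B_def using True
        by (intro CollectI exI[of _ "r"]) auto
      moreover have "r mod int n = r" using True assms by (intro mod_pos_pos_trivial) auto
      ultimately show ?thesis by (metis image_eqI)
    next
      case False
      then have rB: "r \<in> ?B" using r by auto
      have "r - int n \<in> conn_B h" unfolding conn_B_def using rB
        by (intro CollectI exI[of _ "int n - r"]) auto
      moreover have "(r - int n) mod int n = r" using rB assms by (simp add: mod_pos_pos_trivial)
      ultimately show ?thesis by (metis image_eqI)
    qed
  qed
qed

lemma card_connB:
  assumes "2 * int h < int n"
  shows "card ((\<lambda>s. s mod int n) ` conn_B h) = 2 * h"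
proof -
  have "card ({1 .. int h} \<union> {int n - int h .. int n - 1}) = card {1 .. int h} + card {int n - int h .. int n - 1}"
    using assms by (intro card_Un_disjoint) auto
  then show ?thesis unfolding img_connB[OF assms] by simp
qed



lemma sum_add_split: "(\<Sum>l<a+b. g l) = (\<Sum>l<a. g l) + (\<Sum>l<b. g (l + a))" for g :: "nat \<Rightarrow> 'a::comm_monoid_add"
  by (induction b) (simp_all add: ac_simps)

lemma split_sum: "(\<Sum>l<2*n+2. g l) = g 0 + (\<Sum>l<n. g (l+1)) + (\<Sum>l<n. g (l+n+1)) + g (2*n+1)"
  for g :: "nat \<Rightarrow> 'a::comm_monoid_add"
proof -
  have "(\<Sum>l<2*n+2. g l) = (\<Sum>l<Suc (2*n). g l) + g (2*n+1)" by simp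
  also have "(\<Sum>l<Suc (2*n). g l) = g 0 + (\<Sum>l<2*n. g (Suc l))" by (rule sum.lessThan_Suc_shift)
  also have "(\<Sum>l<2*n. g (Suc l)) = (\<Sum>l<n+n. g (Suc l))" by (simp add: mult_2)
  also have "\<dots> = (\<Sum>l<n. g (l+1)) + (\<Sum>l<n. g (l+n+1))" by (simp add: sum_add_split)
  finally show ?thesis by (simp add: add.assoc)
qed

definition FF :: "complex \<Rightarrow> nat \<Rightarrow> nat \<Rightarrow> nat \<Rightarrow> complex" where
  "FF K n j i = (if i = 0 then ca K j else if i \<le> n then cb K j else if i \<le> 2*n then cc K j
     else if i = 2*n+1 then cd K j else 0)"

lemma badj:
  assumes "x < n" "l < n"
  shows "block_adj n SA SB SC 0 0 = False"
    "block_adj n SA SB SC 0 (l+1) = True"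
    "block_adj n SA SB SC 0 (l+n+1) = False"
    "block_adj n SA SB SC 0 (2*n+1) = False"
    "block_adj n SA SB SC (x+1) 0 = True"
    "block_adj n SA SB SC (x+1) (l+1) = circ_adj n SA x l"
    "block_adj n SA SB SC (x+1) (l+n+1) = circ_adj n SC x l"
    "block_adj n SA SB SC (x+1) (2*n+1) = False"
    "block_adj n SA SB SC (x+n+1) 0 = False"
    "block_adj n SA SB SC (x+n+1) (l+1) = circ_adj n SC l x"
    "block_adj n SA SB SC (x+n+1) (l+n+1) = circ_adj n SB x l"
    "block_adj n SA SB SC (x+n+1) (2*n+1) = True"
    "block_adj n SA SB SC (2*n+1) 0 = False"
    "block_adj n SA SB SC (2*n+1) (l+1) = False"
    "block_adj n SA SB SC (2*n+1) (l+n+1) = True"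
    "block_adj n SA SB SC (2*n+1) (2*n+1) = False"
  using assms unfolding block_adj_def by auto

lemma badj2:
  assumes "x < n" "l < n"
  shows "block_adj n SA SB SC 0 0 = False"
    "block_adj n SA SB SC 0 (Suc l) = True"
    "block_adj n SA SB SC 0 (Suc (l+n)) = False"
    "block_adj n SA SB SC 0 (Suc (2*n)) = False"
    "block_adj n SA SB SC (Suc x) 0 = True"
    "block_adj n SA SB SC (Suc x) (Suc l) = circ_adj n SA x l"
    "block_adj n SA SB SC (Suc x) (Suc (l+n)) = circ_adj n SC x l"
    "block_adj n SA SB SC (Suc x) (Suc (2*n)) = False"
    "block_adj n SA SB SC (Suc (x+n)) 0 = False"
    "block_adj n SA SB SC (Suc (x+n)) (Suc l) = circ_adj n SC l x"
    "block_adj n SA SB SC (Suc (x+n)) (Suc (l+n)) = circ_adj n SB x l"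
    "block_adj n SA SB SC (Suc (x+n)) (Suc (2*n)) = True"
    "block_adj n SA SB SC (Suc (2*n)) 0 = False"
    "block_adj n SA SB SC (Suc (2*n)) (Suc l) = False"
    "block_adj n SA SB SC (Suc (2*n)) (Suc (l+n)) = True"
    "block_adj n SA SB SC (Suc (2*n)) (Suc (2*n)) = False"
  using assms unfolding block_adj_def by auto

lemma badj_out: "2*n+2 \<le> i \<Longrightarrow> block_adj n SA SB SC i l = False"
  unfolding block_adj_def by auto

lemma matpow_closed:
  fixes n :: nat and K :: complex
  assumes n0: "0 < n" and K0: "K \<noteq> 0"
   and cA: "of_nat (card ((\<lambda>s. s mod int n) ` SA)) = 6*K"
   and cB: "of_nat (card ((\<lambda>s. s mod int n) ` SB)) = 6*K"
   and cC: "of_nat (card ((\<lambda>s. s mod int n) ` SC)) = 8*K"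
   and nK: "of_nat n = 15*K^2"
  shows "mat_pow (2*n+2) (adj_mat (block_adj n SA SB SC)) j i 0 = FF K n j i"
proof (induction j arbitrary: i)
  case 0
  then show ?case unfolding FF_def ca_def cb_def cc_def cd_def by simp
next
  case (Suc j)
  define M where "M = adj_mat (block_adj n SA SB SC)"
  have "mat_pow (2*n+2) M (Suc j) i 0 = (\<Sum>l<2*n+2. M i l * FF K n j l)"
    using Suc unfolding M_def by simp
  also have "\<dots> = M i 0 * ca K j + (\<Sum>l<n. M i (l+1) * cb K j) + (\<Sum>l<n. M i (l+n+1) * cc K j)
      + M i (2*n+1) * cd K j"
    unfolding split_sum by (simp add: FF_def)
  finally have st: "mat_pow (2*n+2) M (Suc j) i 0 = M i 0 * ca K j + (\<Sum>l<n. M i (l+1) * cb K j)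
      + (\<Sum>l<n. M i (l+n+1) * cc K j) + M i (2*n+1) * cd K j" .
  have cases: "i = 0 \<or> (\<exists>x<n. i = x+1) \<or> (\<exists>x<n. i = x+n+1) \<or> i = 2*n+1 \<or> 2*n+2 \<le> i"
  proof -
    have "i = 0 \<or> (1 \<le> i \<and> i \<le> n) \<or> (n+1 \<le> i \<and> i \<le> 2*n) \<or> i = 2*n+1 \<or> 2*n+2 \<le> i" by linarith
    then show ?thesis
    proof (elim disjE)
      assume "1 \<le> i \<and> i \<le> n" then show ?thesis by (intro disjI2 disjI1 exI[of _ "i-1"]) auto
    next
      assume "n+1 \<le> i \<and> i \<le> 2*n" then show ?thesis by (intro disjI2[OF disjI2[OF disjI1]] exI[of _ "i-n-1"]) auto
    qed auto
  qed
  show ?case unfolding M_def[symmetric] st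
  proof -
    from cases show "M i 0 * ca K j + (\<Sum>l<n. M i (l+1) * cb K j) + (\<Sum>l<n. M i (l+n+1) * cc K j)
      + M i (2*n+1) * cd K j = FF K n (Suc j) i"
    proof (elim disjE exE conjE)
      assume i: "i = 0"
      have "(\<Sum>l<n. M i (l+1) * cb K j) = of_nat n * cb K j"
        using i by (simp add: M_def adj_mat_def badj badj2)
      moreover have "(\<Sum>l<n. M i (l+n+1) * cc K j) = 0"
        using i by (simp add: M_def adj_mat_def badj badj2)
      ultimately show ?thesis using i n0 K0 by (simp add: M_def adj_mat_def badj badj2 FF_def rec_a nK)
    next
      fix x assume x: "x < n" and i: "i = x+1"
      have "(\<Sum>l<n. M i (l+1) * cb K j) = (\<Sum>l<n. if circ_adj n SA x l then cb K j else 0)"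
        using i x by (intro sum.cong) (simp_all add: M_def adj_mat_def badj badj2)
      also have "\<dots> = 6*K * cb K j" using sum_circ1[OF x, where S=SA and c="cb K j"] cA by simp
      finally have s1: "(\<Sum>l<n. M i (l+1) * cb K j) = 6*K * cb K j" .
      have "(\<Sum>l<n. M i (l+n+1) * cc K j) = (\<Sum>l<n. if circ_adj n SC x l then cc K j else 0)"
        using i x by (intro sum.cong) (simp_all add: M_def adj_mat_def badj badj2)
      also have "\<dots> = 8*K * cc K j" using sum_circ1[OF x, where S=SC and c="cc K j"] cC by simp
      finally have s2: "(\<Sum>l<n. M i (l+n+1) * cc K j) = 8*K * cc K j" .
      have m0: "M i 0 = 1" "M i (2*n+1) = 0" using i x by (simp_all add: M_def adj_mat_def badj badj2)
      have f: "FF K n (Suc j) i = cb K (Suc j)" using i x by (simp add: FF_def)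
      show ?thesis unfolding s1 s2 m0 f rec_b[OF K0] by simp
    next
      fix x assume x: "x < n" and i: "i = x+n+1"
      have "(\<Sum>l<n. M i (l+1) * cb K j) = (\<Sum>l<n. if circ_adj n SC l x then cb K j else 0)"
        using i x by (intro sum.cong) (simp_all add: M_def adj_mat_def badj badj2)
      also have "\<dots> = 8*K * cb K j" using sum_circ2[OF x, where S=SC and c="cb K j"] cC by simp
      finally have s1: "(\<Sum>l<n. M i (l+1) * cb K j) = 8*K * cb K j" .
      have "(\<Sum>l<n. M i (l+n+1) * cc K j) = (\<Sum>l<n. if circ_adj n SB x l then cc K j else 0)"
        using i x by (intro sum.cong) (simp_all add: M_def adj_mat_def badj badj2)
      also have "\<dots> = 6*K * cc K j" using sum_circ1[OF x, where S=SB and c="cc K j"] cB by simp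
      finally have s2: "(\<Sum>l<n. M i (l+n+1) * cc K j) = 6*K * cc K j" .
      have m0: "M i 0 = 0" "M i (2*n+1) = 1" using i x by (simp_all add: M_def adj_mat_def badj badj2)
      have f: "FF K n (Suc j) i = cc K (Suc j)" using i x by (simp add: FF_def)
      show ?thesis unfolding s1 s2 m0 f rec_c[OF K0] by simp
    next
      assume i: "i = 2*n+1"
      have "(\<Sum>l<n. M i (l+1) * cb K j) = 0"
        using i by (simp add: M_def adj_mat_def badj badj2)
      moreover have "(\<Sum>l<n. M i (l+n+1) * cc K j) = of_nat n * cc K j"
        using i by (simp add: M_def adj_mat_def badj badj2)
      ultimately show ?thesis using i n0 K0 by (simp add: M_def adj_mat_def badj badj2 FF_def rec_d nK)
    next
      assume i: "2*n+2 \<le> i"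
      then show ?thesis by (simp add: M_def adj_mat_def badj_out FF_def)
    qed
  qed
qed



lemma exp_sums_c: "(\<lambda>j. w^j / of_nat (fact j)) sums exp w" for w :: complex
  using exp_converges[of w] by (simp add: scaleR_conv_of_real divide_inverse mult.commute)

lemma pst:
  fixes n k :: nat
  assumes n0: "0 < n" and k0: "0 < k"
   and cA: "card ((\<lambda>s. s mod int n) ` SA) = 6*k"
   and cB: "card ((\<lambda>s. s mod int n) ` SB) = 6*k"
   and cC: "card ((\<lambda>s. s mod int n) ` SC) = 8*k"
   and nK: "n = 15*k^2"
  shows "has_PST (2*n+2) (block_adj n SA SB SC) 0 (2*n+1)"
proof -
  define K :: complex where "K = of_nat k"
  have K0: "K \<noteq> 0" using k0 unfolding K_def by simp
  define t where "t = pi / (4 * real k)"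
  define z where "z = - \<i> * complex_of_real t"
  define q where "q = K * z"
  define p where "p = \<i> * complex_of_real (pi/4)"
  have mp: "mat_pow (2*n+2) (adj_mat (block_adj n SA SB SC)) j (2*n+1) 0 = cd K j" for j
  proof -
    have "mat_pow (2*n+2) (adj_mat (block_adj n SA SB SC)) j (2*n+1) 0 = FF K n j (2*n+1)"
    proof (rule matpow_closed[OF n0 K0])
      show "of_nat (card ((\<lambda>s. s mod int n) ` SA)) = 6*K" unfolding cA K_def by simp
      show "of_nat (card ((\<lambda>s. s mod int n) ` SB)) = 6*K" unfolding cB K_def by simp
      show "of_nat (card ((\<lambda>s. s mod int n) ` SC)) = 8*K" unfolding cC K_def by simp
      show "of_nat n = 15*K^2" unfolding nK K_def by simp
    qed
    then show ?thesis by (simp add: FF_def)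
  qed
  have trm: "z^j / of_nat (fact j) * cd K j =
      1/32 * ((15*q)^j / of_nat (fact j)) + 15/32 * ((-q)^j / of_nat (fact j))
      - (5/16 * ((3*q)^j / of_nat (fact j)) + 3/16 * ((-5*q)^j / of_nat (fact j)))" for j
    unfolding cd_def q_def power_mult_distrib power_minus[of "K*z"] power_minus[of K]
    by (simp add: field_simps power_mult_distrib)
  define v where "v = 1/32 * exp (15*q) + 15/32 * exp (-q) - (5/16 * exp (3*q) + 3/16 * exp (-5*q))"
  have "(\<lambda>j. z^j / of_nat (fact j) * cd K j) sums v"
    unfolding trm v_def
    by (intro sums_add sums_diff sums_mult exp_sums_c)
  then have ee: "exp_entry (2*n+2) (adj_mat (block_adj n SA SB SC)) t (2*n+1) 0 = v"
    unfolding exp_entry_def mp z_def by (simp add: sums_iff)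
  have qp: "q = - p"
  proof -
    have "K * complex_of_real t = complex_of_real (real k * t)" unfolding K_def by simp
    also have "real k * t = pi/4" unfolding t_def using k0 by simp
    finally show ?thesis unfolding q_def z_def p_def by (simp add: mult.assoc)
  qed
  have pi4: "complex_of_real (pi/4) = complex_of_real pi / 4" by simp
  have e1: "exp (15*q) = exp p"
  proof -
    have "15*q = p + \<i> * (of_int (-2) * (of_real pi * 2))" unfolding qp p_def pi4 by (simp add: field_simps)
    then show ?thesis by (simp only: exp_plus_2pin)
  qed
  have e2: "exp (-q) = exp p" unfolding qp by simp
  have e3: "exp (3*q) = - exp p"
  proof -
    have "3*q = (p + \<i> * of_real pi) + \<i> * (of_int (-1) * (of_real pi * 2))" unfolding qp p_def pi4 by (simp add: field_simps)
    then have "exp (3*q) = exp (p + \<i> * of_real pi)" by (simp only: exp_plus_2pin)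
    then show ?thesis by (simp add: exp_add)
  qed
  have e4: "exp (-5*q) = - exp p"
  proof -
    have "-5*q = p + \<i> * of_real pi" unfolding qp p_def pi4 by (simp add: field_simps)
    then show ?thesis by (simp add: exp_add)
  qed
  have "v = exp p" unfolding v_def e1 e2 e3 e4 by (simp add: field_simps)
  then have "cmod (exp_entry (2*n+2) (adj_mat (block_adj n SA SB SC)) t (2*n+1) 0) = 1"
    using ee unfolding p_def by simp
  then show ?thesis unfolding has_PST_def by blast
qed



lemma lin_aux:
  fixes N D K P T :: int
  assumes "2 * K \<le> P" "0 \<le> K" "2 * D \<le> N" "N = 15 * P" "T = 3 * K"
  shows "N \<le> 3 * (N - D - T)"
  using assms by simp

theorem theorem2:
  fixes m n a b :: nat and SC :: "int set"
  assumes "m \<ge> 2"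
    and "n = 15 * 2 ^ (2 * (m - 2))"
    and "a = 6 * 2 ^ (m - 2)"
    and "b = 8 * 2 ^ (m - 2)"
    and "circ_conn_set n b SC"
  shows "has_PST (2 * n + 2) (block_adj n (conn_A n (a div 2)) (conn_B (a div 2)) SC) 0 (2 * n + 1)
    \<and> \<not> (\<exists>\<tau>. is_automorphism (2 * n + 2) (block_adj n (conn_A n (a div 2)) (conn_B (a div 2)) SC) \<tau>
              \<and> \<tau> 0 = 2 * n + 1)"
proof -
  define k :: nat where "k = 2 ^ (m - 2)"
  have k1: "1 \<le> k" unfolding k_def by simp
  have pe: "(2::nat)^(2*(m-2)) = (2^(m-2))^2" by (metis power_mult mult.commute)
  have nk: "n = 15 * k^2" unfolding k_def assms(2) pe by simp
  have h: "a div 2 = 3 * k" unfolding assms(3) k_def by simp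
  have bk: "b = 8 * k" unfolding assms(4) k_def by simp
  have kk: "k \<le> k * k" using k1 by simp
  have n0: "0 < n" using nk k1 by simp
  have d2: "2 * (n div 2) \<le> n" by simp
  have nkk: "n = 15 * (k * k)" using nk by (simp add: power2_eq_square)
  have i1: "2 * int (n div 2) \<le> int n" using d2 by linarith
  have i2: "int n = 15 * int (k*k)" using nkk by simp
  have i3: "int k \<le> int (k*k)" using kk by linarith
  have i4: "int (3*k) = 3 * int k" by simp
  have h1: "int (n div 2) + int (3*k) < int n" using i1 i2 i3 i4 k1 by linarith
  have h1': "2 * int (3*k) < int n" using i2 i3 i4 k1 by linarith
  have cA: "card ((\<lambda>s. s mod int n) ` conn_A n (3*k)) = 6*k" using card_connA[OF h1] by simp
  have cB: "card ((\<lambda>s. s mod int n) ` conn_B (3*k)) = 6*k" using card_connB[OF h1'] by simp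
  have cC: "card ((\<lambda>s. s mod int n) ` SC) = 8*k" using assms(5) bk unfolding circ_conn_set_def by simp
  have P1: "has_PST (2 * n + 2) (block_adj n (conn_A n (3*k)) (conn_B (3*k)) SC) 0 (2 * n + 1)"
    by (rule pst[OF n0 _ cA cB cC nk]) (use k1 in simp)
  have h2: "int n \<le> 3 * (int n - int (n div 2) - int (3*k))"
  proof (cases "k = 1")
    case True
    then have "n = 15" using nk by simp
    then show ?thesis using True by simp
  next
    case False
    have "m \<noteq> 2" using False unfolding k_def by auto
    then have "1 \<le> m - 2" using assms(1) by simp
    then have "(2::nat)^1 \<le> 2^(m-2)" by (intro power_increasing) auto
    then have "k \<ge> 2" unfolding k_def by simp
    then have "2 * k \<le> k * k" by simp
    then have "2 * int k \<le> int (k*k)" by linarith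
    moreover have "(0::int) \<le> int k" by simp
    ultimately show ?thesis using i1 i2 i4 lin_aux by blast
  qed
  have P2: "\<not> (\<exists>\<tau>. is_automorphism (2 * n + 2) (block_adj n (conn_A n (3*k)) (conn_B (3*k)) SC) \<tau>
              \<and> \<tau> 0 = 2 * n + 1)"
    by (rule no_aut[OF h1 h2]) (use k1 nkk kk i2 i3 in linarith)+
  show ?thesis unfolding h using P1 P2 by blast
qed

end
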